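(* Assume $f_0,f_1\in \mathrm{PL}_0(\mathbf{I})$ generate a standard isomorphic copy of $F$. (Up) Suppose $(a,c)$ is an up-bump of $f_0$, $(b_n,c)$ is an orbital of $f_1$, and $p$ is the minimal number such that $f_0|_{[p,c]}=f_1|_{[p,c]}$. If $q\in(a,p)$ satisfies $qf_0=qf_1$, then $q\in(b_n,p)$. (Down) Suppose $(a,c)$ is a down-bump of $f_0$, $(a,d_1)$ is an orbital of $f_1$, and $\rho$ is the maximal number such that $f_0|_{[a,\rho]}=f_1|_{[a,\rho]}$. If $q\in(\rho,c)$ satisfies $qf_0=qf_1$, then $q\in(\rho,d_1)$.
   Context: $\mathrm{PL}_0(\mathbf{I})$ is the group of orientation-preserving piecewise-linear homeomorphisms of $[0,1]$ with finitely many points of non-differentiability; functions act on the right ($tf=f(t)$). The orbitals of $f$ are the connected components (open intervals) of $\operatorname{Supp}(f)=\{x: xf\ne x\}$; an orbital $A$ is an up-bump (resp. down-bump) if $xf>x$ (resp. $xf<x$) for all $x\in A$. Thompson's group $F=\langle x_0,x_1\mid [x_0x_1^{-1},x_1^{x_0}]=[x_0x_1^{-1},x_1^{x_0^2}]=1\rangle$, with $a^b=b^{-1}ab$, $[a,b]=aba^{-1}b^{-1}$; $f_0,f_1$ generate a standard isomorphic copy of $F$ if $\langle f_0,f_1\rangle\cong F$ via an isomorphism with $x_0\mapsto f_0$, $x_1\mapsto f_1$. *)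

theory Defs
  imports "HOL-Analysis.Analysis"
begin

text \<open>Elements of PL_0(I): orientation-preserving homeomorphisms of [0,1]
  (continuous, strictly increasing, fixing 0 and 1) that are piecewise linear
  with finitely many breakpoints 0 = t_0 < ... < t_n = 1.
  Functions are total on real; only their values on [0,1] matter.\<close>
definition PL0 :: "(real \<Rightarrow> real) \<Rightarrow> bool" where
  "PL0 f \<longleftrightarrow> continuous_on {0..1} f \<and> strict_mono_on {0..1} f \<and> f 0 = 0 \<and> f 1 = 1 \<and>
     (\<exists>ts::real list. sorted_wrt (<) ts \<and> length ts \<ge> 2 \<and> hd ts = 0 \<and> last ts = 1 \<and>
        (\<forall>i < length ts - 1. \<exists>m k. \<forall>x \<in> {ts!i..ts!(i+1)}. f x = m * x + k))"

definition Supp :: "(real \<Rightarrow> real) \<Rightarrow> real set" where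
  "Supp f = {x \<in> {0..1}. f x \<noteq> x}"

definition orbital :: "(real \<Rightarrow> real) \<Rightarrow> real set \<Rightarrow> bool" where
  "orbital f A \<longleftrightarrow> A \<in> components (Supp f)"

definition up_bump :: "(real \<Rightarrow> real) \<Rightarrow> real set \<Rightarrow> bool" where
  "up_bump f A \<longleftrightarrow> orbital f A \<and> (\<forall>x\<in>A. f x > x)"

definition down_bump :: "(real \<Rightarrow> real) \<Rightarrow> real set \<Rightarrow> bool" where
  "down_bump f A \<longleftrightarrow> orbital f A \<and> (\<forall>x\<in>A. f x < x)"

text \<open>Words in the generators x_0 (False), x_1 (True); the second component
  marks an inverse letter.\<close>
type_synonym word = "(bool \<times> bool) list"

definition winv :: "word \<Rightarrow> word" where
  "winv w = rev (map (\<lambda>(g, i). (g, \<not> i)) w)"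

definition wconj :: "word \<Rightarrow> word \<Rightarrow> word" where
  "wconj a b = winv b @ a @ b"

definition wcomm :: "word \<Rightarrow> word \<Rightarrow> word" where
  "wcomm a b = a @ b @ winv a @ winv b"

definition X0 :: word where "X0 = [(False, False)]"
definition X1 :: word where "X1 = [(True, False)]"

definition F_relators :: "word set" where
  "F_relators = {wcomm (X0 @ winv X1) (wconj X1 X0),
                 wcomm (X0 @ winv X1) (wconj X1 (X0 @ X0))}"

inductive Feq :: "word \<Rightarrow> word \<Rightarrow> bool" where
  Feq_refl: "Feq w w"
| Feq_sym: "Feq u v \<Longrightarrow> Feq v u"
| Feq_trans: "Feq u v \<Longrightarrow> Feq v w \<Longrightarrow> Feq u w"
| Feq_cancel: "Feq (u @ [(g, i), (g, \<not> i)] @ v) (u @ v)"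
| Feq_rel: "r \<in> F_relators \<Longrightarrow> Feq (u @ r @ v) (u @ v)"

text \<open>Right action: t (l w) = (t l) w; inverse letters act by the inverse on [0,1].\<close>
definition letter_act :: "(real \<Rightarrow> real) \<Rightarrow> (real \<Rightarrow> real) \<Rightarrow> bool \<times> bool \<Rightarrow> real \<Rightarrow> real" where
  "letter_act f0 f1 l = (let h = (if fst l then f1 else f0) in
                          if snd l then inv_into {0..1} h else h)"

fun word_act :: "(real \<Rightarrow> real) \<Rightarrow> (real \<Rightarrow> real) \<Rightarrow> word \<Rightarrow> real \<Rightarrow> real" where
  "word_act f0 f1 [] = id"
| "word_act f0 f1 (l # w) = word_act f0 f1 w \<circ> letter_act f0 f1 l"

text \<open>f0, f1 generate a standard isomorphic copy of F: the assignment
  x0 \<mapsto> f0, x1 \<mapsto> f1 gives a well-defined injective homomorphism, i.e. a word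
  acts trivially on [0,1] iff it is trivial in F.\<close>
definition standard_F :: "(real \<Rightarrow> real) \<Rightarrow> (real \<Rightarrow> real) \<Rightarrow> bool" where
  "standard_F f0 f1 \<longleftrightarrow> (\<forall>w. (\<forall>t\<in>{0..1}. word_act f0 f1 w t = t) \<longleftrightarrow> Feq w [])"

end

theory Submission
  imports Defs
begin


definition hom01 :: "(real \<Rightarrow> real) \<Rightarrow> bool" where
 "hom01 h \<longleftrightarrow> continuous_on {0..1} h \<and> (\<forall>x\<in>{0..1}. h x \<in> {0..1}) \<and>
    (\<forall>x\<in>{0..1}. \<forall>y\<in>{0..1}. x < y \<longrightarrow> h x < h y)"

definition iv :: "(real \<Rightarrow> real) \<Rightarrow> real \<Rightarrow> real" where
 "iv f = inv_into {0..1} f"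

lemma hom01_range: "hom01 h \<Longrightarrow> x \<in> {0..1} \<Longrightarrow> h x \<in> {0..1}"
  unfolding hom01_def by blast

lemma hom01_less: "hom01 h \<Longrightarrow> x \<in> {0..1} \<Longrightarrow> y \<in> {0..1} \<Longrightarrow> h x < h y \<longleftrightarrow> x < y"
  unfolding hom01_def by (metis linorder_neqE_linordered_idom order_less_asym)

lemma hom01_le: "hom01 h \<Longrightarrow> x \<in> {0..1} \<Longrightarrow> y \<in> {0..1} \<Longrightarrow> h x \<le> h y \<longleftrightarrow> x \<le> y"
  by (meson hom01_less not_le)

lemma hom01_eq: "hom01 h \<Longrightarrow> x \<in> {0..1} \<Longrightarrow> y \<in> {0..1} \<Longrightarrow> h x = h y \<longleftrightarrow> x = y"
  by (metis hom01_less less_irrefl linorder_neqE_linordered_idom)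

lemma hom01_comp: "hom01 h \<Longrightarrow> hom01 k \<Longrightarrow> hom01 (\<lambda>x. h (k x))"
  unfolding hom01_def
  apply (intro conjI)
    apply (rule continuous_on_compose2[of "{0..1}" h "{0..1}" k]; auto)
   apply blast
  by blast

lemma PL0_hom: assumes "PL0 f" shows "hom01 f"
proof -
  have sm: "strict_mono_on {0..1} f" and c: "continuous_on {0..1} f" and f0: "f 0 = 0" and f1: "f 1 = 1"
    using assms unfolding PL0_def by auto
  have r: "f x \<in> {0..1}" if "x \<in> {0..1}" for x
  proof -
    have "f 0 \<le> f x" using strict_mono_onD[OF sm, of 0 x] that by (cases "x = 0") auto
    moreover have "f x \<le> f 1" using strict_mono_onD[OF sm, of x 1] that by (cases "x = 1") auto
    ultimately show ?thesis using f0 f1 by auto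
  qed
  show ?thesis unfolding hom01_def using c r strict_mono_onD[OF sm] by blast
qed

lemma PL0_surj: assumes "PL0 f" "y \<in> {0..1::real}" shows "\<exists>x\<in>{0..1}. f x = y"
proof -
  have c: "continuous_on {0..1} f" and f0: "f 0 = 0" and f1: "f 1 = 1"
    using assms unfolding PL0_def by auto
  show ?thesis using IVT'[of f 0 y 1] c f0 f1 assms(2) by auto
qed

lemma PL0_image: "PL0 f \<Longrightarrow> f ` {0..1} = {0..1}"
  using PL0_surj[of f] hom01_range[OF PL0_hom, of f] by force

lemma PL0_inj: "PL0 f \<Longrightarrow> inj_on f {0..1}"
  using hom01_eq[OF PL0_hom] unfolding inj_on_def by blast

lemma iv_f: "PL0 f \<Longrightarrow> x \<in> {0..1} \<Longrightarrow> iv f (f x) = x"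
  unfolding iv_def by (rule inv_into_f_f[OF PL0_inj])

lemma f_iv: "PL0 f \<Longrightarrow> y \<in> {0..1} \<Longrightarrow> f (iv f y) = y"
  unfolding iv_def by (rule f_inv_into_f) (simp add: PL0_image)

lemma iv_range: "PL0 f \<Longrightarrow> y \<in> {0..1} \<Longrightarrow> iv f y \<in> {0..1}"
  unfolding iv_def using inv_into_into[of y f "{0..1}"] by (simp add: PL0_image)

lemma iv_hom: assumes "PL0 f" shows "hom01 (iv f)"
proof -
  have c: "continuous_on {0..1} f" using assms unfolding PL0_def by auto
  have "continuous_on (f ` {0..1}) (iv f)"
    by (rule continuous_on_inv[OF c]) (auto simp: iv_f[OF assms])
  hence cc: "continuous_on {0..1} (iv f)" using PL0_image[OF assms] by simp
  have m: "iv f x < iv f y" if "x \<in> {0..1}" "y \<in> {0..1}" "x < y" for x y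
  proof (rule ccontr)
    assume "\<not> ?thesis"
    hence "iv f y \<le> iv f x" by simp
    hence "f (iv f y) \<le> f (iv f x)"
      using hom01_le[OF PL0_hom[OF assms]] iv_range[OF assms] that by blast
    thus False using f_iv[OF assms] that by auto
  qed
  show ?thesis unfolding hom01_def using cc m iv_range[OF assms] by blast
qed

lemma iv_eq: "PL0 f \<Longrightarrow> a \<in> {0..1} \<Longrightarrow> b \<in> {0..1} \<Longrightarrow> iv f a = b \<longleftrightarrow> a = f b"
  using f_iv[of f a] iv_f[of f b] by auto



definition PLl :: "real list \<Rightarrow> (real \<Rightarrow> real) \<Rightarrow> bool" where
 "PLl ts f \<longleftrightarrow> sorted_wrt (<) ts \<and> length ts \<ge> 2 \<and> hd ts = 0 \<and> last ts = 1 \<and>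
        (\<forall>i < length ts - 1. \<exists>m k. \<forall>x \<in> {ts!i..ts!(i+1)}. f x = m * x + k)"

definition bd :: "real set \<Rightarrow> real \<Rightarrow> bool" where
 "bd S e \<longleftrightarrow> e \<in> S \<and> (\<forall>\<epsilon>>0. \<exists>y\<in>{0..1}. \<bar>y - e\<bar> < \<epsilon> \<and> y \<notin> S)"

definition chainfree :: "(real \<Rightarrow> bool) \<Rightarrow> nat \<Rightarrow> bool" where
 "chainfree P N \<longleftrightarrow> \<not> (\<exists>e. (\<forall>i<N. e i < e (Suc i)) \<and> (\<forall>i\<le>N. P (e i)))"

lemma PL0_PLl: "PL0 f \<Longrightarrow> \<exists>ts. PLl ts f"
  unfolding PL0_def PLl_def by blast

lemma PLl_id: "PLl [0,1] (\<lambda>x. x)"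
proof -
  have "\<exists>m k. \<forall>x::real. x = m*x+k" by (intro exI[of _ 1] exI[of _ 0]) simp
  thus ?thesis by (simp add: PLl_def) blast
qed

lemma piece:
  assumes "PLl ts f" "0 \<le> x" "x < y" "y \<le> 1" "\<forall>t\<in>set ts. \<not> (x < t \<and> t < y)"
  shows "\<exists>m k. \<forall>t\<in>{x..y}. f t = m * t + k"
proof -
  let ?n = "length ts"
  have st: "sorted_wrt (<) ts" and n2: "?n \<ge> 2" and h: "hd ts = 0" and l: "last ts = 1"
    and lin: "\<forall>i < ?n - 1. \<exists>m k. \<forall>x \<in> {ts!i..ts!(i+1)}. f x = m * x + k"
    using assms(1) unfolding PLl_def by auto
  have ne: "ts \<noteq> []" using n2 by auto
  have t0: "ts!0 = 0" using h ne by (simp add: hd_conv_nth)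
  have tl: "ts!(?n - 1) = 1" using l ne by (simp add: last_conv_nth)
  define I where "I = {i. i < ?n - 1 \<and> ts!i \<le> x}"
  have finI: "finite I" unfolding I_def by auto
  have "0 \<in> I" unfolding I_def using n2 t0 assms(2) by auto
  hence Ine: "I \<noteq> {}" by auto
  define i where "i = Max I"
  have iI: "i \<in> I" unfolding i_def using finI Ine Max_in by blast
  hence i1: "i < ?n - 1" and ix: "ts!i \<le> x" unfolding I_def by auto
  have xi: "x < ts!(i+1)"
  proof (cases "i + 1 < ?n - 1")
    case True
    have "i + 1 \<notin> I" using Max_ge[OF finI] i_def by fastforce
    thus ?thesis using True unfolding I_def by auto
  next
    case False
    hence "i + 1 = ?n - 1" using i1 by auto
    thus ?thesis using tl assms(3,4) by auto
  qed
  have "ts!(i+1) \<in> set ts" using i1 by auto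
  hence yi: "y \<le> ts!(i+1)" using assms(5) xi by force
  obtain m k where "\<forall>x \<in> {ts!i..ts!(i+1)}. f x = m * x + k" using lin i1 by blast
  thus ?thesis using ix yi by (intro exI[of _ m] exI[of _ k]) auto
qed

lemma chain_mono: "(\<forall>i<N. e i < e (Suc i)) \<Longrightarrow> i < j \<Longrightarrow> j \<le> N \<Longrightarrow> (e i :: real) < e j"
proof (induction j)
  case 0 then show ?case by simp
next
  case (Suc j)
  show ?case
  proof (cases "i = j")
    case True then show ?thesis using Suc by auto
  next
    case False
    hence "e i < e j" using Suc by auto
    also have "e j < e (Suc j)" using Suc by auto
    finally show ?thesis .
  qed
qed

lemma chain_mono_le: "(\<forall>i<N. e i < e (Suc i)) \<Longrightarrow> i \<le> j \<Longrightarrow> j \<le> N \<Longrightarrow> (e i :: real) \<le> e j"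
  using chain_mono[of N e i j] by (cases "i = j") auto

lemma fin_bd:
  assumes A: "PLl ts f" and B: "PLl ts' h"
  shows "chainfree (bd {x\<in>{0..1}. f x = h x}) (2*(length ts + length ts') + 2)"
  unfolding chainfree_def
proof
  let ?Z = "{x\<in>{0..1}. f x = h x}"
  let ?L = "length ts + length ts'"
  let ?N = "2*?L + 2"
  let ?T = "set ts \<union> set ts'"
  assume "\<exists>e. (\<forall>i<?N. e i < e (Suc i)) \<and> (\<forall>i\<le>?N. bd ?Z (e i))"
  then obtain e where ch: "\<forall>i<?N. e i < e (Suc i)" and bde: "\<forall>i\<le>?N. bd ?Z (e i)" by blast
  have "\<exists>j\<le>?L. \<forall>t\<in>?T. \<not> (e (2*j) < t \<and> t < e (2*j+2))"
  proof (rule ccontr)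
    assume "\<not> ?thesis"
    hence "\<forall>j\<in>{..?L}. \<exists>t. t \<in> ?T \<and> e (2*j) < t \<and> t < e (2*j+2)" by auto
    then obtain c where c: "\<forall>j\<in>{..?L}. c j \<in> ?T \<and> e (2*j) < c j \<and> c j < e (2*j+2)"
      by metis
    have inj: "inj_on c {..?L}"
    proof (rule inj_onI)
      fix j j' assume jj: "j \<in> {..?L}" "j' \<in> {..?L}" "c j = c j'"
      show "j = j'"
      proof (rule ccontr)
        assume "j \<noteq> j'"
        then consider "j < j'" | "j' < j" by linarith
        thus False
        proof cases
          case 1
          have "e (2*j+2) \<le> e (2*j')" using chain_mono_le[OF ch, of "2*j+2" "2*j'"] 1 jj by auto
          moreover have "c j < e (2*j+2)" "e (2*j') < c j'" using c jj(1,2) by auto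
          ultimately show False using jj(3) by linarith
        next
          case 2
          have "e (2*j'+2) \<le> e (2*j)" using chain_mono_le[OF ch, of "2*j'+2" "2*j"] 2 jj by auto
          moreover have "c j' < e (2*j'+2)" "e (2*j) < c j" using c jj(1,2) by auto
          ultimately show False using jj(3) by linarith
        qed
      qed
    qed
    have "c ` {..?L} \<subseteq> ?T" using c by auto
    hence "card (c ` {..?L}) \<le> card ?T" by (intro card_mono) auto
    also have "\<dots> \<le> card (set ts) + card (set ts')" by (rule card_Un_le)
    also have "\<dots> \<le> ?L" using card_length[of ts] card_length[of ts'] by linarith
    finally show False using card_image[OF inj] by simp
  qed
  then obtain j where jL: "j \<le> ?L" and nob: "\<forall>t\<in>?T. \<not> (e (2*j) < t \<and> t < e (2*j+2))" by blast
  define x where "x = e (2*j)"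
  define y where "y = e (2*j+2)"
  define w where "w = e (2*j+1)"
  have xw: "x < w" unfolding x_def w_def using ch jL by auto
  have wy: "w < y" unfolding y_def w_def using ch jL by auto
  have xZ: "x \<in> ?Z" using bde jL unfolding x_def bd_def by auto
  have yZ: "y \<in> ?Z" using bde jL unfolding y_def bd_def by auto
  have wbd: "bd ?Z w" using bde jL unfolding w_def by auto
  obtain m k where mk: "\<forall>t\<in>{x..y}. f t = m * t + k"
    using piece[OF A, of x y] xZ yZ xw wy nob unfolding x_def[symmetric] y_def[symmetric] by auto
  obtain m' k' where mk': "\<forall>t\<in>{x..y}. h t = m' * t + k'"
    using piece[OF B, of x y] xZ yZ xw wy nob unfolding x_def[symmetric] y_def[symmetric] by auto
  have ex: "m * x + k = m' * x + k'" using mk mk' xZ xw wy by auto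
  have ey: "m * y + k = m' * y + k'" using mk mk' yZ xw wy by auto
  have "(m - m') * (y - x) = 0" using ex ey by (simp add: algebra_simps)
  hence mm: "m = m'" using xw wy by auto
  hence kk: "k = k'" using ex by simp
  have eq: "\<forall>t\<in>{x..y}. f t = h t" using mk mk' mm kk by auto
  have mpos: "min (w - x) (y - w) > 0" using xw wy by simp
  obtain t where t: "t \<in> {0..1}" "\<bar>t - w\<bar> < min (w - x) (y - w)" "t \<notin> ?Z"
    using wbd mpos unfolding bd_def by blast
  hence "t \<in> {x..y}" by (auto simp: abs_if split: if_splits)
  hence "f t = h t" using eq by blast
  thus False using t(1,3) by blast
qed

lemma inv_fix:
  fixes \<alpha> :: "real \<Rightarrow> real"
  assumes P: "\<And>x. P x \<Longrightarrow> x \<in> {0..1} \<and> P (\<alpha> x)"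
    and mono: "\<And>x y. x \<in> {0..1} \<Longrightarrow> y \<in> {0..1} \<Longrightarrow> x < y \<Longrightarrow> \<alpha> x < \<alpha> y"
    and cf: "chainfree P N" and e0: "P e0"
  shows "\<alpha> e0 = e0"
proof (rule ccontr)
  assume ne: "\<alpha> e0 \<noteq> e0"
  define s where "s n = (\<alpha> ^^ n) e0" for n
  have sS: "s (Suc n) = \<alpha> (s n)" for n unfolding s_def by simp
  have Ps: "P (s n)" for n
  proof (induction n)
    case 0 then show ?case using e0 by (simp add: s_def)
  next
    case (Suc n) then show ?case using P[of "s n"] sS[of n] by simp
  qed
  have s01: "s n \<in> {0..1}" for n using P[OF Ps[of n]] by blast
  consider "\<alpha> e0 > e0" | "\<alpha> e0 < e0" using ne by linarith
  thus False
  proof cases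
    case 1
    have inc: "s n < s (Suc n)" for n
    proof (induction n)
      case 0 then show ?case using 1 by (simp add: s_def)
    next
      case (Suc n) then show ?case using mono[OF s01[of n] s01[of "Suc n"]] sS[of n] sS[of "Suc n"] by simp
    qed
    hence "(\<forall>i<N. s i < s (Suc i)) \<and> (\<forall>i\<le>N. P (s i))" using Ps by blast
    thus False using cf unfolding chainfree_def by blast
  next
    case 2
    have dec: "s (Suc n) < s n" for n
    proof (induction n)
      case 0 then show ?case using 2 by (simp add: s_def)
    next
      case (Suc n) then show ?case using mono[OF s01[of "Suc n"] s01[of n]] sS[of n] sS[of "Suc n"] by simp
    qed
    define e where "e i = s (N - i)" for i
    have ch: "\<forall>i<N. e i < e (Suc i)"
    proof (intro allI impI)
      fix i assume "i < N"
      hence "N - i = Suc (N - Suc i)" by auto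
      thus "e i < e (Suc i)" unfolding e_def using dec by metis
    qed
    have "\<forall>i\<le>N. P (e i)" using Ps by (simp add: e_def)
    thus False using cf ch unfolding chainfree_def by blast
  qed
qed

lemma bd_transfer:
  assumes h: "hom01 h" and S: "\<And>x. x \<in> {0..1} \<Longrightarrow> x \<in> S \<longleftrightarrow> h x \<in> Z"
    and Ssub: "S \<subseteq> {0..1}" and b: "bd S e"
  shows "bd Z (h e)"
proof -
  have eS: "e \<in> S" using b unfolding bd_def by auto
  hence e01: "e \<in> {0..1}" using Ssub by auto
  have hZ: "h e \<in> Z" using S e01 eS by auto
  have c: "continuous_on {0..1} h" using h unfolding hom01_def by auto
  show ?thesis unfolding bd_def
  proof (intro conjI hZ allI impI)
    fix \<epsilon> :: real assume "\<epsilon> > 0"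
    then obtain d where d: "d > 0" "\<forall>y\<in>{0..1}. dist y e < d \<longrightarrow> dist (h y) (h e) < \<epsilon>"
      using c e01 unfolding continuous_on_iff by blast
    obtain y where y: "y \<in> {0..1}" "\<bar>y - e\<bar> < d" "y \<notin> S" using b d(1) unfolding bd_def by blast
    have "dist (h y) (h e) < \<epsilon>" using d y by (simp add: dist_real_def)
    thus "\<exists>y\<in>{0..1}. \<bar>y - h e\<bar> < \<epsilon> \<and> y \<notin> Z"
      using y S hom01_range[OF h y(1)] by (intro bexI[of _ "h y"]) (auto simp: dist_real_def)
  qed
qed

lemma chainfree_transfer:
  assumes cf: "chainfree Q N" and PQ: "\<And>x. P x \<Longrightarrow> Q (h x) \<and> x \<in> {0..1}" and h: "hom01 h"
  shows "chainfree P N"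
  unfolding chainfree_def
proof
  assume "\<exists>e. (\<forall>i<N. e i < e (Suc i)) \<and> (\<forall>i\<le>N. P (e i))"
  then obtain e where ch: "\<forall>i<N. e i < e (Suc i)" and Pe: "\<forall>i\<le>N. P (e i)" by blast
  have "\<forall>i<N. h (e i) < h (e (Suc i))"
  proof (intro allI impI)
    fix i assume i: "i < N"
    have "e i \<in> {0..1}" "e (Suc i) \<in> {0..1}" using Pe PQ i by auto
    thus "h (e i) < h (e (Suc i))" using hom01_less[OF h] ch i by blast
  qed
  moreover have "\<forall>i\<le>N. Q (h (e i))" using Pe PQ by blast
  ultimately have "\<exists>e'. (\<forall>i<N. e' i < e' (Suc i)) \<and> (\<forall>i\<le>N. Q (e' i))"
    by (intro exI[of _ "\<lambda>i. h (e i)"]) simp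
  thus False using cf unfolding chainfree_def by blast
qed



lemma r1_word: "wcomm (X0 @ winv X1) (wconj X1 X0) = [(False,False),(True,True),(False,True),(True,False),(False,False),(True,False),(False,True),(False,True),(True,True),(False,False)]"
  by (simp add: wcomm_def wconj_def winv_def X0_def X1_def)

lemma r2_word: "wcomm (X0 @ winv X1) (wconj X1 (X0 @ X0)) = [(False,False),(True,True),(False,True),(False,True),(True,False),(False,False),(False,False),(True,False),(False,True),(False,True),(False,True),(True,True),(False,False),(False,False)]"
  by (simp add: wcomm_def wconj_def winv_def X0_def X1_def)

lemma act1: "word_act f0 f1 [(False,False),(True,True),(False,True),(True,False),(False,False),(True,False),(False,True),(False,True),(True,True),(False,False)] t
   = f0 (iv f1 (iv f0 (iv f0 (f1 (f0 (f1 (iv f0 (iv f1 (f0 t)))))))))"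
  by (simp add: letter_act_def iv_def)

lemma act2: "word_act f0 f1 [(False,False),(True,True),(False,True),(False,True),(True,False),(False,False),(False,False),(True,False),(False,True),(False,True),(False,True),(True,True),(False,False),(False,False)] t
   = f0 (f0 (iv f1 (iv f0 (iv f0 (iv f0 (f1 (f0 (f0 (f1 (iv f0 (iv f0 (iv f1 (f0 t)))))))))))))"
  by (simp add: letter_act_def iv_def)


lemma comm:
  assumes st: "standard_F f0 f1" and p0: "PL0 f0" and p1: "PL0 f1"
  shows "\<forall>x\<in>{0..1}. iv f0 (iv f1 (f0 (f0 (f1 x)))) = f1 (iv f0 (iv f1 (f0 (f0 x))))"
    and "\<forall>x\<in>{0..1}. iv f0 (iv f0 (iv f1 (f0 (f0 (f0 (f1 x)))))) = f1 (iv f0 (iv f0 (iv f1 (f0 (f0 (f0 x))))))"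
proof -
  have R[simp]: "x \<in> {0..1} \<Longrightarrow> f0 x \<in> {0..1}" "x \<in> {0..1} \<Longrightarrow> f1 x \<in> {0..1}"
     "x \<in> {0..1} \<Longrightarrow> iv f0 x \<in> {0..1}" "x \<in> {0..1} \<Longrightarrow> iv f1 x \<in> {0..1}" for x
    using hom01_range[OF PL0_hom[OF p0]] hom01_range[OF PL0_hom[OF p1]] iv_range[OF p0] iv_range[OF p1]
    by auto
  have E[simp]: "a \<in> {0..1} \<Longrightarrow> b \<in> {0..1} \<Longrightarrow> f0 a = f0 b \<longleftrightarrow> a = b"
     "a \<in> {0..1} \<Longrightarrow> b \<in> {0..1} \<Longrightarrow> f1 a = f1 b \<longleftrightarrow> a = b"
     "a \<in> {0..1} \<Longrightarrow> b \<in> {0..1} \<Longrightarrow> iv f0 a = b \<longleftrightarrow> a = f0 b"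
     "a \<in> {0..1} \<Longrightarrow> b \<in> {0..1} \<Longrightarrow> iv f1 a = b \<longleftrightarrow> a = f1 b" for a b
    using hom01_eq[OF PL0_hom[OF p0]] hom01_eq[OF PL0_hom[OF p1]] iv_eq[OF p0] iv_eq[OF p1] by auto
  have t1: "\<forall>t\<in>{0..1}. word_act f0 f1 (wcomm (X0 @ winv X1) (wconj X1 X0)) t = t"
    using st Feq_rel[of _ "[]" "[]"] unfolding standard_F_def F_relators_def by auto
  have t2: "\<forall>t\<in>{0..1}. word_act f0 f1 (wcomm (X0 @ winv X1) (wconj X1 (X0 @ X0))) t = t"
    using st Feq_rel[of _ "[]" "[]"] unfolding standard_F_def F_relators_def by auto
  show "\<forall>x\<in>{0..1}. iv f0 (iv f1 (f0 (f0 (f1 x)))) = f1 (iv f0 (iv f1 (f0 (f0 x))))"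
  proof
    fix x :: real assume x: "x \<in> {0..1}"
    have "f0 (iv f1 (iv f0 (iv f0 (f1 (f0 (f1 (iv f0 (iv f1 (f0 (f0 x)))))))))) = f0 x"
      using bspec[OF t1, of "f0 x"] x unfolding r1_word act1 by (simp del: atLeastAtMost_iff)
    thus "iv f0 (iv f1 (f0 (f0 (f1 x)))) = f1 (iv f0 (iv f1 (f0 (f0 x))))" using x by (simp del: atLeastAtMost_iff)
  qed
  show "\<forall>x\<in>{0..1}. iv f0 (iv f0 (iv f1 (f0 (f0 (f0 (f1 x)))))) = f1 (iv f0 (iv f0 (iv f1 (f0 (f0 (f0 x))))))"
  proof
    fix x :: real assume x: "x \<in> {0..1}"
    have "f0 (f0 (iv f1 (iv f0 (iv f0 (iv f0 (f1 (f0 (f0 (f1 (iv f0 (iv f0 (iv f1 (f0 (f0 (f0 x))))))))))))))) = f0 (f0 x)"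
      using bspec[OF t2, of "f0 (f0 x)"] x unfolding r2_word act2 by (simp del: atLeastAtMost_iff)
    thus "iv f0 (iv f0 (iv f1 (f0 (f0 (f0 (f1 x)))))) = f1 (iv f0 (iv f0 (iv f1 (f0 (f0 (f0 x))))))" using x by (simp del: atLeastAtMost_iff)
  qed
qed



lemma lemA:
  assumes p0: "PL0 f0" and p1: "PL0 f1"
    and c1: "\<forall>x\<in>{0..1}. iv f0 (iv f1 (f0 (f0 (f1 x)))) = f1 (iv f0 (iv f1 (f0 (f0 x))))"
    and w: "w \<in> {0..1}" "f1 w = w" and nb: "\<forall>\<epsilon>>0. \<exists>y\<in>{0..1}. \<bar>y - w\<bar> < \<epsilon> \<and> f1 y \<noteq> y"
  shows "f0 (f0 w) = f1 (f0 w)"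
proof -
  have R[simp]: "x \<in> {0..1} \<Longrightarrow> f0 x \<in> {0..1}" "x \<in> {0..1} \<Longrightarrow> f1 x \<in> {0..1}"
     "x \<in> {0..1} \<Longrightarrow> iv f0 x \<in> {0..1}" "x \<in> {0..1} \<Longrightarrow> iv f1 x \<in> {0..1}" for x
    using hom01_range[OF PL0_hom[OF p0]] hom01_range[OF PL0_hom[OF p1]] iv_range[OF p0] iv_range[OF p1]
    by auto
  have E[simp]: "a \<in> {0..1} \<Longrightarrow> b \<in> {0..1} \<Longrightarrow> f0 a = f0 b \<longleftrightarrow> a = b"
     "a \<in> {0..1} \<Longrightarrow> b \<in> {0..1} \<Longrightarrow> f1 a = f1 b \<longleftrightarrow> a = b"
     "a \<in> {0..1} \<Longrightarrow> b \<in> {0..1} \<Longrightarrow> iv f0 a = b \<longleftrightarrow> a = f0 b"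
     "a \<in> {0..1} \<Longrightarrow> b \<in> {0..1} \<Longrightarrow> iv f1 a = b \<longleftrightarrow> a = f1 b" for a b
    using hom01_eq[OF PL0_hom[OF p0]] hom01_eq[OF PL0_hom[OF p1]] iv_eq[OF p0] iv_eq[OF p1] by auto
  define g where "g x = iv f0 (iv f1 (f0 (f0 x)))" for x
  have h00: "hom01 (\<lambda>x. f0 (f0 x))" by (rule hom01_comp[OF PL0_hom[OF p0] PL0_hom[OF p0]])
  have h100: "hom01 (\<lambda>x. iv f1 (f0 (f0 x)))" by (rule hom01_comp[OF iv_hom[OF p1] h00])
  have hg: "hom01 g" unfolding g_def by (rule hom01_comp[OF iv_hom[OF p0] h100])
  define Z1 where "Z1 = {x\<in>{0..1}. f1 x = (\<lambda>x. x) x}"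
  obtain ts1 where ts1: "PLl ts1 f1" using PL0_PLl[OF p1] by blast
  have cf: "chainfree (bd Z1) (2*(length ts1 + length [0::real,1]) + 2)"
    unfolding Z1_def by (rule fin_bd[OF ts1 PLl_id])
  have bdw: "bd Z1 w" unfolding bd_def Z1_def using w nb by auto
  have inv: "x \<in> Z1 \<longleftrightarrow> g x \<in> Z1" if x: "x \<in> {0..1}" for x
  proof -
    have gx: "g x \<in> {0..1}" using hom01_range[OF hg x] .
    have "g (f1 x) = f1 (g x)" using c1 x unfolding g_def by blast
    hence "g x \<in> Z1 \<longleftrightarrow> g (f1 x) = g x" using gx unfolding Z1_def by auto
    also have "\<dots> \<longleftrightarrow> f1 x = x"
    proof -
      have f1x: "f1 x \<in> {0..1}" using R(2)[OF x] .
      show ?thesis using hom01_eq[OF hg f1x x] .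
    qed
    finally show ?thesis unfolding Z1_def using x by auto
  qed
  have P: "bd Z1 x \<Longrightarrow> x \<in> {0..1} \<and> bd Z1 (g x)" for x
  proof -
    assume b: "bd Z1 x"
    have "Z1 \<subseteq> {0..1}" unfolding Z1_def by auto
    thus ?thesis using bd_transfer[OF hg inv _ b] b unfolding bd_def by auto
  qed
  have "g w = w"
    by (rule inv_fix[of "bd Z1" g, OF P _ cf bdw]) (use hom01_less[OF hg] in auto)
  thus ?thesis unfolding g_def using w by (simp del: atLeastAtMost_iff)
qed

lemma lemB:
  assumes p0: "PL0 f0" and p1: "PL0 f1"
    and c2: "\<forall>x\<in>{0..1}. iv f0 (iv f0 (iv f1 (f0 (f0 (f0 (f1 x)))))) = f1 (iv f0 (iv f0 (iv f1 (f0 (f0 (f0 x))))))"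
    and z: "z \<in> {0..1}" and y: "y \<in> {0..1}"
    and nf: "\<forall>x. min z y \<le> x \<and> x \<le> max z y \<longrightarrow> f1 x \<noteq> x"
    and zS: "f0 (f0 (f0 z)) = f1 (f0 (f0 z))" and yS: "f0 (f0 (f0 y)) \<noteq> f1 (f0 (f0 y))"
  shows False
proof -
  have R[simp]: "x \<in> {0..1} \<Longrightarrow> f0 x \<in> {0..1}" "x \<in> {0..1} \<Longrightarrow> f1 x \<in> {0..1}"
     "x \<in> {0..1} \<Longrightarrow> iv f0 x \<in> {0..1}" "x \<in> {0..1} \<Longrightarrow> iv f1 x \<in> {0..1}" for x
    using hom01_range[OF PL0_hom[OF p0]] hom01_range[OF PL0_hom[OF p1]] iv_range[OF p0] iv_range[OF p1]
    by auto
  have E[simp]: "a \<in> {0..1} \<Longrightarrow> b \<in> {0..1} \<Longrightarrow> f0 a = f0 b \<longleftrightarrow> a = b"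
     "a \<in> {0..1} \<Longrightarrow> b \<in> {0..1} \<Longrightarrow> f1 a = f1 b \<longleftrightarrow> a = b"
     "a \<in> {0..1} \<Longrightarrow> b \<in> {0..1} \<Longrightarrow> iv f0 a = b \<longleftrightarrow> a = f0 b"
     "a \<in> {0..1} \<Longrightarrow> b \<in> {0..1} \<Longrightarrow> iv f1 a = b \<longleftrightarrow> a = f1 b" for a b
    using hom01_eq[OF PL0_hom[OF p0]] hom01_eq[OF PL0_hom[OF p1]] iv_eq[OF p0] iv_eq[OF p1] by auto
  define g where "g x = iv f0 (iv f0 (iv f1 (f0 (f0 (f0 x)))))" for x
  define S where "S = {x\<in>{0..1}. f0 (f0 (f0 x)) = f1 (f0 (f0 x))}"
  define Z where "Z = {x\<in>{0..1}. f0 x = f1 x}"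
  have gS: "g x = x \<longleftrightarrow> x \<in> S" if x: "x \<in> {0..1}" for x
    unfolding g_def S_def using x by (simp del: atLeastAtMost_iff)
  have g01: "g x \<in> {0..1}" if x: "x \<in> {0..1}" for x unfolding g_def using x by (simp del: atLeastAtMost_iff)
  have invS: "x \<in> S \<longleftrightarrow> f1 x \<in> S" if x: "x \<in> {0..1}" for x
  proof -
    have "g (f1 x) = f1 (g x)" using c2 x unfolding g_def by blast
    hence "f1 x \<in> S \<longleftrightarrow> f1 (g x) = f1 x" using gS[of "f1 x"] x by (simp del: atLeastAtMost_iff)
    also have "\<dots> \<longleftrightarrow> g x = x" using x g01[OF x] by (simp del: atLeastAtMost_iff)
    finally show ?thesis using gS x by blast
  qed
  have Ssub: "S \<subseteq> {0..1}" unfolding S_def by auto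
  have h00: "hom01 (\<lambda>x. f0 (f0 x))" by (rule hom01_comp[OF PL0_hom[OF p0] PL0_hom[OF p0]])
  have h000: "hom01 (\<lambda>x. f0 (f0 (f0 x)))" by (rule hom01_comp[OF PL0_hom[OF p0] h00])
  have h100: "hom01 (\<lambda>x. f1 (f0 (f0 x)))" by (rule hom01_comp[OF PL0_hom[OF p1] h00])
  have SZ: "x \<in> S \<longleftrightarrow> (\<lambda>x. f0 (f0 x)) x \<in> Z" if x: "x \<in> {0..1}" for x
    unfolding S_def Z_def using x by (simp del: atLeastAtMost_iff)
  obtain ts0 where ts0: "PLl ts0 f0" using PL0_PLl[OF p0] by blast
  obtain ts1 where ts1: "PLl ts1 f1" using PL0_PLl[OF p1] by blast
  have cfZ: "chainfree (bd Z) (2*(length ts0 + length ts1) + 2)"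
    unfolding Z_def by (rule fin_bd[OF ts0 ts1])
  have cfS: "chainfree (bd S) (2*(length ts0 + length ts1) + 2)"
  proof (rule chainfree_transfer[OF cfZ _ h00])
    fix x assume b: "bd S x"
    thus "bd Z (f0 (f0 x)) \<and> x \<in> {0..1}"
      using bd_transfer[OF h00 SZ Ssub b] Ssub unfolding bd_def by auto
  qed
  have P: "bd S x \<Longrightarrow> x \<in> {0..1} \<and> bd S (f1 x)" for x
  proof -
    assume b: "bd S x"
    thus ?thesis using bd_transfer[OF PL0_hom[OF p1] invS Ssub b] Ssub unfolding bd_def by auto
  qed
  have cS: "continuous_on {0..1} (\<lambda>x. f0 (f0 (f0 x)) - f1 (f0 (f0 x)))"
    using h000 h100 unfolding hom01_def by (intro continuous_on_diff) auto
  have closS: "closed S"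
  proof -
    have "closed {x\<in>{0..1}. (\<lambda>x. f0 (f0 (f0 x)) - f1 (f0 (f0 x))) x = 0}"
      by (rule continuous_closed_preimage_constant[OF cS]) simp
    thus ?thesis by (simp add: S_def)
  qed
  have zS': "z \<in> S" unfolding S_def using z zS by auto
  have yS': "y \<notin> S" unfolding S_def using yS by auto
  have "\<exists>e. bd S e \<and> min z y \<le> e \<and> e \<le> max z y"
  proof (cases "z < y")
    case True
    define T where "T = S \<inter> {z..y}"
    have cT: "closed T" unfolding T_def using closS by auto
    have neT: "T \<noteq> {}" unfolding T_def using zS' True by auto
    have bT: "bdd_above T" unfolding T_def by auto
    define e where "e = Sup T"
    have eT: "e \<in> T" unfolding e_def using closed_contains_Sup[OF neT bT cT] .
    have ey: "e < y" using eT yS' unfolding T_def by (cases "e = y") auto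
    have ub: "t \<in> T \<Longrightarrow> t \<le> e" for t unfolding e_def using cSup_upper[OF _ bT] by blast
    have "bd S e" unfolding bd_def
    proof (intro conjI allI impI)
      show "e \<in> S" using eT unfolding T_def by auto
      fix \<epsilon> :: real assume ep: "\<epsilon> > 0"
      define t where "t = min (e + \<epsilon>/2) y"
      have te: "e < t" unfolding t_def using ep ey by auto
      have tz: "z \<le> t" "t \<le> y" using te eT unfolding T_def t_def by auto
      have "t \<notin> S" using ub[of t] te tz unfolding T_def by auto
      moreover have "t \<in> {0..1}" using tz z y by auto
      moreover have "\<bar>t - e\<bar> < \<epsilon>" using te ep unfolding t_def by auto
      ultimately show "\<exists>y\<in>{0..1}. \<bar>y - e\<bar> < \<epsilon> \<and> y \<notin> S" by blast
    qed
    thus ?thesis using eT True unfolding T_def by (intro exI[of _ e]) auto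
  next
    case False
    hence True: "y < z" using zS' yS' by (cases "y = z") auto
    define T where "T = S \<inter> {y..z}"
    have cT: "closed T" unfolding T_def using closS by auto
    have neT: "T \<noteq> {}" unfolding T_def using zS' True by auto
    have bT: "bdd_below T" unfolding T_def by auto
    define e where "e = Inf T"
    have eT: "e \<in> T" unfolding e_def using closed_contains_Inf[OF neT bT cT] .
    have ey: "y < e" using eT yS' unfolding T_def by (cases "e = y") auto
    have lb: "t \<in> T \<Longrightarrow> e \<le> t" for t unfolding e_def using cInf_lower[OF _ bT] by blast
    have "bd S e" unfolding bd_def
    proof (intro conjI allI impI)
      show "e \<in> S" using eT unfolding T_def by auto
      fix \<epsilon> :: real assume ep: "\<epsilon> > 0"
      define t where "t = max (e - \<epsilon>/2) y"
      have te: "t < e" unfolding t_def using ep ey by auto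
      have tz: "y \<le> t" "t \<le> z" using te eT unfolding T_def t_def by auto
      have "t \<notin> S" using lb[of t] te tz unfolding T_def by auto
      moreover have "t \<in> {0..1}" using tz z y by auto
      moreover have "\<bar>t - e\<bar> < \<epsilon>" using te ep unfolding t_def by auto
      ultimately show "\<exists>y\<in>{0..1}. \<bar>y - e\<bar> < \<epsilon> \<and> y \<notin> S" by blast
    qed
    thus ?thesis using eT True unfolding T_def by (intro exI[of _ e]) auto
  qed
  then obtain e where e: "bd S e" "min z y \<le> e" "e \<le> max z y" by blast
  have "f1 e = e"
    by (rule inv_fix[of "bd S" f1, OF P _ cfS e(1)]) (use hom01_less[OF PL0_hom[OF p1]] in auto)
  thus False using nf e by blast
qed



lemma comp_facts:
  assumes p: "PL0 f" and C: "{a<..<c} \<in> components (Supp f)"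
  shows "a < c \<and> 0 \<le> a \<and> c \<le> 1 \<and> f a = a \<and> f c = c \<and> (\<forall>x\<in>{a<..<c}. f x \<noteq> x)"
proof -
  have M: "{a<..<c} \<noteq> {} \<and> {a<..<c} \<subseteq> Supp f \<and> connected {a<..<c} \<and>
     (\<forall>D. D \<noteq> {} \<and> {a<..<c} \<subseteq> D \<and> D \<subseteq> Supp f \<and> connected D \<longrightarrow> D = {a<..<c})"
    using C unfolding in_components_maximal by blast
  have ac: "a < c" using M by simp
  have S0: "{a<..<c} \<subseteq> Supp f" using M by blast
  have Dmax: "\<And>D. D \<noteq> {} \<Longrightarrow> {a<..<c} \<subseteq> D \<Longrightarrow> D \<subseteq> Supp f \<Longrightarrow> connected D \<Longrightarrow> D = {a<..<c}"
    using M by blast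
  from S0 have sub: "\<forall>x\<in>{a<..<c}. 0 \<le> x \<and> x \<le> 1 \<and> f x \<noteq> x" unfolding Supp_def by auto
  have a0: "0 \<le> a"
  proof (rule ccontr)
    assume "\<not> 0 \<le> a"
    hence m: "(a + min c 0)/2 \<in> {a<..<c}" and n: "(a + min c 0)/2 < 0" using ac by auto
    have "0 \<le> (a + min c 0)/2" using bspec[OF sub m] by blast
    thus False using n by linarith
  qed
  have c1: "c \<le> 1"
  proof (rule ccontr)
    assume "\<not> c \<le> 1"
    hence m: "(max a 1 + c)/2 \<in> {a<..<c}" and n: "(max a 1 + c)/2 > 1" using ac by auto
    have "(max a 1 + c)/2 \<le> 1" using bspec[OF sub m] by blast
    thus False using n by linarith
  qed
  have fa: "f a = a"
  proof (rule ccontr)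
    assume "f a \<noteq> a"
    hence "a \<in> Supp f" using a0 c1 ac unfolding Supp_def by auto
    hence "{a..<c} \<subseteq> Supp f" using S0 by (auto simp: less_eq_real_def)
    moreover have "{a<..<c} \<subseteq> {a..<c}" by auto
    moreover have "{a..<c} \<noteq> {}" using ac by auto
    ultimately have "{a..<c} = {a<..<c}" using Dmax connected_Ico by blast
    thus False using ac by (metis atLeastLessThan_iff greaterThanLessThan_iff order_refl less_irrefl)
  qed
  have fc: "f c = c"
  proof (rule ccontr)
    assume "f c \<noteq> c"
    hence "c \<in> Supp f" using a0 c1 ac unfolding Supp_def by auto
    hence "{a<..c} \<subseteq> Supp f" using S0 by (auto simp: less_eq_real_def)
    moreover have "{a<..<c} \<subseteq> {a<..c}" by auto
    moreover have "{a<..c} \<noteq> {}" using ac by auto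
    ultimately have "{a<..c} = {a<..<c}" using Dmax connected_Ioc by blast
    thus False using ac by (metis greaterThanAtMost_iff greaterThanLessThan_iff order_refl less_irrefl)
  qed
  show ?thesis using ac a0 c1 fa fc sub by auto
qed

lemma closed_eqset:
  fixes F G :: "real \<Rightarrow> real"
  assumes "continuous_on {0..1} F" "continuous_on {0..1} G" "0 \<le> s" "t \<le> (1::real)"
  shows "closed {x\<in>{s..t}. F x = G x}"
proof -
  have st: "{s..t} \<subseteq> {0..1}" using assms(3,4) by auto
  have "continuous_on {s..t} (\<lambda>x. F x - G x)"
    by (rule continuous_on_diff[OF continuous_on_subset[OF assms(1) st] continuous_on_subset[OF assms(2) st]])
  hence "closed {x\<in>{s..t}. (\<lambda>x. F x - G x) x = 0}"
    by (rule continuous_closed_preimage_constant) (rule closed_atLeastAtMost)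
  moreover have "{x\<in>{s..t}. (\<lambda>x. F x - G x) x = 0} = {x\<in>{s..t}. F x = G x}" by auto
  ultimately show ?thesis by simp
qed

lemma sup_in: "closed A \<Longrightarrow> A \<subseteq> {s..t::real} \<Longrightarrow> r \<in> A \<Longrightarrow> Sup A \<in> A \<and> (\<forall>x\<in>A. x \<le> Sup A)"
proof -
  assume a: "closed A" "A \<subseteq> {s..t::real}" "r \<in> A"
  have b: "bdd_above A" by (rule bdd_above_mono[OF _ a(2)]) simp
  have "A \<noteq> {}" using a(3) by blast
  thus ?thesis using closed_contains_Sup[OF _ b a(1)] cSup_upper[OF _ b] by blast
qed

lemma inf_in: "closed A \<Longrightarrow> A \<subseteq> {s..t::real} \<Longrightarrow> r \<in> A \<Longrightarrow> Inf A \<in> A \<and> (\<forall>x\<in>A. Inf A \<le> x)"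
proof -
  assume a: "closed A" "A \<subseteq> {s..t::real}" "r \<in> A"
  have b: "bdd_below A" by (rule bdd_below_mono[OF _ a(2)]) simp
  have "A \<noteq> {}" using a(3) by blast
  thus ?thesis using closed_contains_Inf[OF _ b a(1)] cInf_lower[OF _ b] by blast
qed



lemma upcase:
  assumes p0: "PL0 f0" and p1: "PL0 f1"
    and c1: "\<forall>x\<in>{0..1}. iv f0 (iv f1 (f0 (f0 (f1 x)))) = f1 (iv f0 (iv f1 (f0 (f0 x))))"
    and c2: "\<forall>x\<in>{0..1}. iv f0 (iv f0 (iv f1 (f0 (f0 (f0 (f1 x)))))) = f1 (iv f0 (iv f0 (iv f1 (f0 (f0 (f0 x))))))"
    and up: "up_bump f0 {a<..<c}" and orb: "orbital f1 {bn<..<c}"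
    and pc: "p \<le> c" and qa: "a < q" and qp: "q < p" and qZ: "f0 q = f1 q"
  shows "bn < q"
proof (rule ccontr)
  assume "\<not> bn < q"
  hence qbn: "q \<le> bn" by simp
  have H0: "hom01 f0" and H1: "hom01 f1" using PL0_hom p0 p1 by auto
  have l0: "x \<in> {0..1} \<Longrightarrow> y \<in> {0..1} \<Longrightarrow> f0 x < f0 y \<longleftrightarrow> x < y" for x y using hom01_less[OF H0] .
  have l1: "x \<in> {0..1} \<Longrightarrow> y \<in> {0..1} \<Longrightarrow> f1 x < f1 y \<longleftrightarrow> x < y" for x y using hom01_less[OF H1] .
  have e0: "x \<in> {0..1} \<Longrightarrow> y \<in> {0..1} \<Longrightarrow> f0 x \<le> f0 y \<longleftrightarrow> x \<le> y" for x y using hom01_le[OF H0] .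
  have r0: "x \<in> {0..1} \<Longrightarrow> f0 x \<in> {0..1}" for x using hom01_range[OF H0] .
  have cf0: "a < c \<and> 0 \<le> a \<and> c \<le> 1 \<and> f0 a = a \<and> f0 c = c"
    using comp_facts[OF p0] up unfolding up_bump_def orbital_def by blast
  have upx: "\<forall>x\<in>{a<..<c}. x < f0 x" using up unfolding up_bump_def by blast
  have cf1: "bn < c \<and> 0 \<le> bn \<and> f1 bn = bn"
    using comp_facts[OF p1] orb unfolding orbital_def by blast
  have f00: "f0 0 = 0" and f10: "f1 0 = 0" and f11: "f1 1 = 1" using p0 p1 unfolding PL0_def by auto
  have cont0: "continuous_on {0..1} f0" and cont1: "continuous_on {0..1} f1"
    using p0 p1 unfolding PL0_def by auto
  have bnac: "a < bn" "bn < c" using qa qbn cf1 by auto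
  have bnZ: "f0 bn \<noteq> f1 bn" using upx bnac cf1 by force
  have qbn': "q < bn" using qbn qZ bnZ by (cases "q = bn") auto
  define Zq where "Zq = {x\<in>{q..bn}. f0 x = f1 x}"
  have cZq: "closed Zq" unfolding Zq_def
    by (rule closed_eqset[OF cont0 cont1]) (use qa cf0 cf1 bnac in auto)
  have qZq: "q \<in> Zq" unfolding Zq_def using qZ qbn by auto
  define m where "m = Sup Zq"
  have mm: "m \<in> Zq \<and> (\<forall>x\<in>Zq. x \<le> m)" unfolding m_def
    by (rule sup_in[OF cZq _ qZq]) (auto simp: Zq_def)
  have mZ: "f0 m = f1 m" and qm: "q \<le> m" and mbn: "m \<le> bn" using mm unfolding Zq_def by auto
  have mbn': "m < bn" using mbn mZ bnZ by (cases "m = bn") auto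
  have gap: "\<And>x. m < x \<Longrightarrow> x \<le> bn \<Longrightarrow> f0 x \<noteq> f1 x"
  proof
    fix x assume x: "m < x" "x \<le> bn" "f0 x = f1 x"
    hence "x \<in> Zq" unfolding Zq_def using qm by auto
    thus False using mm x by force
  qed
  have m01: "m \<in> {0..1}" using qa qm mbn cf0 cf1 bnac by auto
  have mac: "a < m" "m < c" using qa qm mbn' bnac by auto
  have fm: "m < f1 m" using upx mac mZ by force
  define U where "U = {x\<in>{0..m}. f1 x = (\<lambda>x. x) x}"
  have cU: "closed U" unfolding U_def
    by (rule closed_eqset[OF cont1 continuous_on_id]) (use m01 in auto)
  have U0: "0 \<in> U" unfolding U_def using f10 m01 by auto
  define u where "u = Sup U"
  have uu: "u \<in> U \<and> (\<forall>x\<in>U. x \<le> u)" unfolding u_def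
    by (rule sup_in[OF cU _ U0]) (auto simp: U_def)
  have fu: "f1 u = u" and u0: "0 \<le> u" and um: "u \<le> m" using uu unfolding U_def by auto
  have um': "u < m" using um fu fm by (cases "u = m") auto
  define V where "V = {x\<in>{m..1}. f1 x = (\<lambda>x. x) x}"
  have cV: "closed V" unfolding V_def
    by (rule closed_eqset[OF cont1 continuous_on_id]) (use m01 in auto)
  have Vbn: "bn \<in> V" unfolding V_def using cf1 mbn cf0 bnac by auto
  define v where "v = Inf V"
  have vv: "v \<in> V \<and> (\<forall>x\<in>V. v \<le> x)" unfolding v_def
    by (rule inf_in[OF cV _ Vbn]) (auto simp: V_def)
  have fv: "f1 v = v" and mv: "m \<le> v" and v1: "v \<le> 1" using vv unfolding V_def by auto
  have mv': "m < v" using mv fv fm by (cases "m = v") auto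
  have vbn: "v \<le> bn" using vv Vbn by blast
  have nfuv: "\<And>x. u < x \<Longrightarrow> x < v \<Longrightarrow> f1 x \<noteq> x"
  proof -
    fix x assume x: "u < x" "x < v"
    show "f1 x \<noteq> x"
    proof
      assume fx: "f1 x = x"
      show False
      proof (cases "x \<le> m")
        case True
        hence "x \<in> U" unfolding U_def using x u0 fx by auto
        thus False using uu x by force
      next
        case False
        hence "x \<in> V" unfolding V_def using x v1 fx by auto
        thus False using vv x by force
      qed
    qed
  qed
  have u01: "u \<in> {0..1}" and v01: "v \<in> {0..1}" using u0 um m01 mv v1 by auto
  have Au: "f0 (f0 u) = f1 (f0 u)"
  proof (rule lemA[OF p0 p1 c1 u01 fu], intro allI impI)
    fix \<epsilon> :: real assume ep: "\<epsilon> > 0"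
    define y where "y = min (u + \<epsilon>/2) m"
    have "u < y" "y < v" "y \<in> {0..1}" "\<bar>y - u\<bar> < \<epsilon>" using ep um' mv' u0 m01 unfolding y_def by auto
    thus "\<exists>y\<in>{0..1}. \<bar>y - u\<bar> < \<epsilon> \<and> f1 y \<noteq> y" using nfuv by blast
  qed
  have Av: "f0 (f0 v) = f1 (f0 v)"
  proof (rule lemA[OF p0 p1 c1 v01 fv], intro allI impI)
    fix \<epsilon> :: real assume ep: "\<epsilon> > 0"
    define y where "y = max (v - \<epsilon>/2) m"
    have "u < y" "y < v" "y \<in> {0..1}" "\<bar>y - v\<bar> < \<epsilon>" using ep um' mv' v1 m01 unfolding y_def by auto
    thus "\<exists>y\<in>{0..1}. \<bar>y - v\<bar> < \<epsilon> \<and> f1 y \<noteq> y" using nfuv by blast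
  qed
  have "f0 u < f0 m" using l0[OF u01 m01] um' by simp
  moreover have "f1 m < f1 v" using l1[OF m01 v01] mv' by simp
  ultimately have f0uv: "f0 u < v" using mZ fv by simp
  have f0um: "f0 u \<le> m"
  proof (rule ccontr)
    assume "\<not> f0 u \<le> m"
    hence "f0 (f0 u) \<noteq> f1 (f0 u)" using gap[of "f0 u"] f0uv vbn by auto
    thus False using Au by simp
  qed
  have vac: "a < v" "v < c" using mac mv' vbn bnac by auto
  have f0v: "v < f0 v" using upx vac by auto
  have f0vbn: "bn < f0 v"
  proof (rule ccontr)
    assume "\<not> bn < f0 v"
    hence "f0 (f0 v) \<noteq> f1 (f0 v)" using gap[of "f0 v"] f0v mv' by auto
    thus False using Av by simp
  qed
  define z where "z = iv f0 v"
  have z01: "z \<in> {0..1}" unfolding z_def using iv_range[OF p0 v01] .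
  have fz: "f0 z = v" unfolding z_def using f_iv[OF p0 v01] .
  have zv: "z < v"
  proof (rule ccontr)
    assume "\<not> z < v"
    hence "f0 v \<le> f0 z" using e0[OF v01 z01] by simp
    thus False using fz f0v by simp
  qed
  have zu: "u < z"
  proof (rule ccontr)
    assume "\<not> u < z"
    hence "f0 z \<le> f0 u" using e0[OF z01 u01] by simp
    thus False using fz f0um mv' by simp
  qed
  have bn01: "bn \<in> {0..1}" using cf1 cf0 by auto
  define y where "y = iv f0 (iv f0 bn)"
  have y01: "y \<in> {0..1}" unfolding y_def using iv_range[OF p0 iv_range[OF p0 bn01]] .
  have fy: "f0 (f0 y) = bn" unfolding y_def using f_iv[OF p0 iv_range[OF p0 bn01]] f_iv[OF p0 bn01] by simp
  have f0u01: "f0 u \<in> {0..1}" using r0[OF u01] .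
  have f0v01: "f0 v \<in> {0..1}" using r0[OF v01] .
  have f0y01: "f0 y \<in> {0..1}" using r0[OF y01] .
  have yu: "u < y"
  proof (rule ccontr)
    assume "\<not> u < y"
    hence "f0 y \<le> f0 u" using e0[OF y01 u01] by simp
    hence "f0 (f0 y) \<le> f0 (f0 u)" using e0[OF f0y01 f0u01] by simp
    moreover have "f0 (f0 u) \<le> f0 m" using e0[OF f0u01 m01] f0um by simp
    ultimately show False using fy mZ fm fv l1[OF m01 v01] mv' vbn by simp
  qed
  have f0vc: "f0 v < c" using l0[OF v01, of c] vac cf0 by auto
  have "f0 v \<in> {a<..<c}" using f0v vac f0vc by auto
  hence ff0v: "f0 v < f0 (f0 v)" using upx by blast
  have yv: "y < v"
  proof (rule ccontr)
    assume "\<not> y < v"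
    hence "f0 v \<le> f0 y" using e0[OF v01 y01] by simp
    hence "f0 (f0 v) \<le> f0 (f0 y)" using e0[OF f0v01 f0y01] by simp
    thus False using fy ff0v f0vbn by simp
  qed
  show False
  proof (rule lemB[OF p0 p1 c2 z01 y01])
    show "\<forall>x. min z y \<le> x \<and> x \<le> max z y \<longrightarrow> f1 x \<noteq> x"
      using nfuv zu zv yu yv by (metis max_less_iff_conj min_less_iff_conj order_less_le_trans order_le_less_trans)
    show "f0 (f0 (f0 z)) = f1 (f0 (f0 z))" using fz Av by simp
    show "f0 (f0 (f0 y)) \<noteq> f1 (f0 (f0 y))" using fy bnZ by simp
  qed
qed


lemma downcase:
  assumes p0: "PL0 f0" and p1: "PL0 f1"
    and c1: "\<forall>x\<in>{0..1}. iv f0 (iv f1 (f0 (f0 (f1 x)))) = f1 (iv f0 (iv f1 (f0 (f0 x))))"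
    and c2: "\<forall>x\<in>{0..1}. iv f0 (iv f0 (iv f1 (f0 (f0 (f0 (f1 x)))))) = f1 (iv f0 (iv f0 (iv f1 (f0 (f0 (f0 x))))))"
    and dn: "down_bump f0 {a<..<c}" and orb: "orbital f1 {a<..<d1}"
    and ar: "a \<le> r" and rq: "r < q" and qc: "q < c" and qZ: "f0 q = f1 q"
  shows "q < d1"
proof (rule ccontr)
  assume "\<not> q < d1"
  hence dq: "d1 \<le> q" by simp
  have H0: "hom01 f0" and H1: "hom01 f1" using PL0_hom p0 p1 by auto
  have l0: "x \<in> {0..1} \<Longrightarrow> y \<in> {0..1} \<Longrightarrow> f0 x < f0 y \<longleftrightarrow> x < y" for x y using hom01_less[OF H0] .
  have l1: "x \<in> {0..1} \<Longrightarrow> y \<in> {0..1} \<Longrightarrow> f1 x < f1 y \<longleftrightarrow> x < y" for x y using hom01_less[OF H1] .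
  have e0: "x \<in> {0..1} \<Longrightarrow> y \<in> {0..1} \<Longrightarrow> f0 x \<le> f0 y \<longleftrightarrow> x \<le> y" for x y using hom01_le[OF H0] .
  have r0: "x \<in> {0..1} \<Longrightarrow> f0 x \<in> {0..1}" for x using hom01_range[OF H0] .
  have cf0: "a < c \<and> 0 \<le> a \<and> c \<le> 1 \<and> f0 a = a \<and> f0 c = c"
    using comp_facts[OF p0] dn unfolding down_bump_def orbital_def by blast
  have dnx: "\<forall>x\<in>{a<..<c}. f0 x < x" using dn unfolding down_bump_def by blast
  have cf1: "a < d1 \<and> d1 \<le> 1 \<and> f1 d1 = d1"
    using comp_facts[OF p1] orb unfolding orbital_def by blast
  have f00: "f0 0 = 0" and f10: "f1 0 = 0" and f11: "f1 1 = 1" using p0 p1 unfolding PL0_def by auto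
  have cont0: "continuous_on {0..1} f0" and cont1: "continuous_on {0..1} f1"
    using p0 p1 unfolding PL0_def by auto
  have dac: "a < d1" "d1 < c" using qc dq cf1 by auto
  have dZ: "f0 d1 \<noteq> f1 d1" using dnx dac cf1 by force
  have dq': "d1 < q" using dq qZ dZ by (cases "q = d1") auto
  define Zq where "Zq = {x\<in>{d1..q}. f0 x = f1 x}"
  have cZq: "closed Zq" unfolding Zq_def
    by (rule closed_eqset[OF cont0 cont1]) (use qc cf0 cf1 dac in auto)
  have qZq: "q \<in> Zq" unfolding Zq_def using qZ dq by auto
  define m where "m = Inf Zq"
  have mm: "m \<in> Zq \<and> (\<forall>x\<in>Zq. m \<le> x)" unfolding m_def
    by (rule inf_in[OF cZq _ qZq]) (auto simp: Zq_def)
  have mZ: "f0 m = f1 m" and qm: "m \<le> q" and dm: "d1 \<le> m" using mm unfolding Zq_def by auto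
  have dm': "d1 < m" using dm mZ dZ by (cases "m = d1") auto
  have gap: "\<And>x. d1 \<le> x \<Longrightarrow> x < m \<Longrightarrow> f0 x \<noteq> f1 x"
  proof
    fix x assume x: "d1 \<le> x" "x < m" "f0 x = f1 x"
    hence "x \<in> Zq" unfolding Zq_def using qm by auto
    thus False using mm x by force
  qed
  have m01: "m \<in> {0..1}" using qc qm dm' cf0 cf1 dac by auto
  have mac: "a < m" "m < c" using qc qm dm' dac by auto
  have fm: "f1 m < m" using dnx mac mZ by force
  define U where "U = {x\<in>{0..m}. f1 x = (\<lambda>x. x) x}"
  have cU: "closed U" unfolding U_def
    by (rule closed_eqset[OF cont1 continuous_on_id]) (use m01 in auto)
  have Ud: "d1 \<in> U" unfolding U_def using cf1 dm cf0 dac by auto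
  define u where "u = Sup U"
  have uu: "u \<in> U \<and> (\<forall>x\<in>U. x \<le> u)" unfolding u_def
    by (rule sup_in[OF cU _ Ud]) (auto simp: U_def)
  have fu: "f1 u = u" and u0: "0 \<le> u" and um: "u \<le> m" using uu unfolding U_def by auto
  have um': "u < m" using um fu fm by (cases "u = m") auto
  have du: "d1 \<le> u" using uu Ud by blast
  define V where "V = {x\<in>{m..1}. f1 x = (\<lambda>x. x) x}"
  have cV: "closed V" unfolding V_def
    by (rule closed_eqset[OF cont1 continuous_on_id]) (use m01 in auto)
  have V1: "1 \<in> V" unfolding V_def using f11 m01 by auto
  define v where "v = Inf V"
  have vv: "v \<in> V \<and> (\<forall>x\<in>V. v \<le> x)" unfolding v_def
    by (rule inf_in[OF cV _ V1]) (auto simp: V_def)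
  have fv: "f1 v = v" and mv: "m \<le> v" and v1: "v \<le> 1" using vv unfolding V_def by auto
  have mv': "m < v" using mv fv fm by (cases "m = v") auto
  have nfuv: "\<And>x. u < x \<Longrightarrow> x < v \<Longrightarrow> f1 x \<noteq> x"
  proof -
    fix x assume x: "u < x" "x < v"
    show "f1 x \<noteq> x"
    proof
      assume fx: "f1 x = x"
      show False
      proof (cases "x \<le> m")
        case True
        hence "x \<in> U" unfolding U_def using x u0 fx by auto
        thus False using uu x by force
      next
        case False
        hence "x \<in> V" unfolding V_def using x v1 fx by auto
        thus False using vv x by force
      qed
    qed
  qed
  have u01: "u \<in> {0..1}" and v01: "v \<in> {0..1}" using u0 um m01 mv v1 by auto
  have Au: "f0 (f0 u) = f1 (f0 u)"
  proof (rule lemA[OF p0 p1 c1 u01 fu], intro allI impI)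
    fix \<epsilon> :: real assume ep: "\<epsilon> > 0"
    define y where "y = min (u + \<epsilon>/2) m"
    have "u < y" "y < v" "y \<in> {0..1}" "\<bar>y - u\<bar> < \<epsilon>" using ep um' mv' u0 m01 unfolding y_def by auto
    thus "\<exists>y\<in>{0..1}. \<bar>y - u\<bar> < \<epsilon> \<and> f1 y \<noteq> y" using nfuv by blast
  qed
  have Av: "f0 (f0 v) = f1 (f0 v)"
  proof (rule lemA[OF p0 p1 c1 v01 fv], intro allI impI)
    fix \<epsilon> :: real assume ep: "\<epsilon> > 0"
    define y where "y = max (v - \<epsilon>/2) m"
    have "u < y" "y < v" "y \<in> {0..1}" "\<bar>y - v\<bar> < \<epsilon>" using ep um' mv' v1 m01 unfolding y_def by auto
    thus "\<exists>y\<in>{0..1}. \<bar>y - v\<bar> < \<epsilon> \<and> f1 y \<noteq> y" using nfuv by blast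
  qed
  have "f0 m < f0 v" using l0[OF m01 v01] mv' by simp
  moreover have "f1 u < f1 m" using l1[OF u01 m01] um' by simp
  ultimately have f0vu: "u < f0 v" "u < f0 m" using mZ fu by simp_all
  have f0vm: "m \<le> f0 v"
  proof (rule ccontr)
    assume "\<not> m \<le> f0 v"
    hence "f0 (f0 v) \<noteq> f1 (f0 v)" using gap[of "f0 v"] f0vu du by auto
    thus False using Av by simp
  qed
  have uac: "a < u" "u < c" using mac um' du dac by auto
  have f0u: "f0 u < u" using dnx uac by auto
  have f0ud: "f0 u < d1"
  proof (rule ccontr)
    assume "\<not> f0 u < d1"
    hence "f0 (f0 u) \<noteq> f1 (f0 u)" using gap[of "f0 u"] f0u um' by auto
    thus False using Au by simp
  qed
  define z where "z = iv f0 u"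
  have z01: "z \<in> {0..1}" unfolding z_def using iv_range[OF p0 u01] .
  have fz: "f0 z = u" unfolding z_def using f_iv[OF p0 u01] .
  have zu: "u < z"
  proof (rule ccontr)
    assume "\<not> u < z"
    hence "f0 z \<le> f0 u" using e0[OF z01 u01] by simp
    thus False using fz f0u by simp
  qed
  have zv: "z < v"
  proof (rule ccontr)
    assume "\<not> z < v"
    hence "f0 v \<le> f0 z" using e0[OF v01 z01] by simp
    thus False using fz f0vm um' by simp
  qed
  have d01: "d1 \<in> {0..1}" using cf1 cf0 by auto
  define y where "y = iv f0 (iv f0 d1)"
  have y01: "y \<in> {0..1}" unfolding y_def using iv_range[OF p0 iv_range[OF p0 d01]] .
  have fy: "f0 (f0 y) = d1" unfolding y_def using f_iv[OF p0 iv_range[OF p0 d01]] f_iv[OF p0 d01] by simp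
  have f0u01: "f0 u \<in> {0..1}" using r0[OF u01] .
  have f0v01: "f0 v \<in> {0..1}" using r0[OF v01] .
  have f0y01: "f0 y \<in> {0..1}" using r0[OF y01] .
  have a01: "a \<in> {0..1}" using cf0 by auto
  have f0ua: "a < f0 u" using l0[OF a01 u01] uac cf0 by auto
  have "f0 u \<in> {a<..<c}" using f0ua f0u uac by auto
  hence ff0u: "f0 (f0 u) < f0 u" using dnx by blast
  have yu: "u < y"
  proof (rule ccontr)
    assume "\<not> u < y"
    hence "f0 y \<le> f0 u" using e0[OF y01 u01] by simp
    hence "f0 (f0 y) \<le> f0 (f0 u)" using e0[OF f0y01 f0u01] by simp
    thus False using fy ff0u f0ud by simp
  qed
  have yv: "y < v"
  proof (rule ccontr)
    assume "\<not> y < v"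
    hence "f0 v \<le> f0 y" using e0[OF v01 y01] by simp
    hence "f0 (f0 v) \<le> f0 (f0 y)" using e0[OF f0v01 f0y01] by simp
    moreover have "f0 m \<le> f0 (f0 v)" using e0[OF m01 f0v01] f0vm by simp
    ultimately show False using fy f0vu du by simp
  qed
  show False
  proof (rule lemB[OF p0 p1 c2 z01 y01])
    show "\<forall>x. min z y \<le> x \<and> x \<le> max z y \<longrightarrow> f1 x \<noteq> x"
      using nfuv zu zv yu yv by (metis max_less_iff_conj min_less_iff_conj order_less_le_trans order_le_less_trans)
    show "f0 (f0 (f0 z)) = f1 (f0 (f0 z))" using fz Au by simp
    show "f0 (f0 (f0 y)) \<noteq> f1 (f0 (f0 y))" using fy dZ by simp
  qed
qed

theorem lemma2p9:
  fixes f0 f1 :: "real \<Rightarrow> real"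
  assumes "PL0 f0" and "PL0 f1" and "standard_F f0 f1"
  shows
   "(\<forall>a c bn p q. up_bump f0 {a<..<c} \<and> orbital f1 {bn<..<c} \<and>
        p \<in> {0..c} \<and> (\<forall>x\<in>{p..c}. f0 x = f1 x) \<and>
        (\<forall>r\<in>{0..c}. (\<forall>x\<in>{r..c}. f0 x = f1 x) \<longrightarrow> p \<le> r) \<and>
        q \<in> {a<..<p} \<and> f0 q = f1 q \<longrightarrow> q \<in> {bn<..<p})
    \<and> (\<forall>a c d1 \<rho> q. down_bump f0 {a<..<c} \<and> orbital f1 {a<..<d1} \<and>
        \<rho> \<in> {a..1} \<and> (\<forall>x\<in>{a..\<rho>}. f0 x = f1 x) \<and>
        (\<forall>r\<in>{a..1}. (\<forall>x\<in>{a..r}. f0 x = f1 x) \<longrightarrow> r \<le> \<rho>) \<and>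
        q \<in> {\<rho><..<c} \<and> f0 q = f1 q \<longrightarrow> q \<in> {\<rho><..<d1})"
proof -
  note c = comm[OF assms(3) assms(1) assms(2)]
  show ?thesis
  proof (intro conjI allI impI)
    fix a c bn p q
    assume H: "up_bump f0 {a<..<c} \<and> orbital f1 {bn<..<c} \<and>
        p \<in> {0..c} \<and> (\<forall>x\<in>{p..c}. f0 x = f1 x) \<and>
        (\<forall>r\<in>{0..c}. (\<forall>x\<in>{r..c}. f0 x = f1 x) \<longrightarrow> p \<le> r) \<and>
        q \<in> {a<..<p} \<and> f0 q = f1 q"
    show "q \<in> {bn<..<p}"
      using upcase[OF assms(1,2) c(1) c(2), of a c bn p q] H by auto
  next
    fix a c d1 \<rho> q
    assume H: "down_bump f0 {a<..<c} \<and> orbital f1 {a<..<d1} \<and>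
        \<rho> \<in> {a..1} \<and> (\<forall>x\<in>{a..\<rho>}. f0 x = f1 x) \<and>
        (\<forall>r\<in>{a..1}. (\<forall>x\<in>{a..r}. f0 x = f1 x) \<longrightarrow> r \<le> \<rho>) \<and>
        q \<in> {\<rho><..<c} \<and> f0 q = f1 q"
    show "q \<in> {\<rho><..<d1}"
      using downcase[OF assms(1,2) c(1) c(2), of a c d1 \<rho> q] H by auto
  qed
qed

end
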